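(* Let $h$ be a Hessenberg function on $\{1,\dots,n\}$. Every $(h,(n))$-filling occurs exactly once among the words at Level $n$ of the $h$-tableau-tree; i.e. the Level $n$ words are exactly all $(h,(n))$-fillings.
   Context: A Hessenberg function is $h:\{1,\dots,n\}\to\{1,\dots,n\}$, $h_i=h(i)$, with $i\le h_i$ and $h_i\le h_{i+1}$; degree tuple $\beta_i=i-\#\{k:h_k<i\}$. A word $u_1\cdots u_m$ of distinct numbers is $h$-permissible if $u_t\le h(u_{t+1})$ for all $t$; an $(h,(n))$-filling is an $h$-permissible permutation of $1,\dots,n$ written in one row. The $h$-tableau-tree: Level 1 is the word $1$; a vertex at Level $i-1$ is an $h$-permissible word $w$ on $\{1,\dots,i-1\}$, whose $\beta_i$ bullet positions are the gaps where inserting $i$ keeps the word $h$-permissible; its children at Level $i$ are joined by edges $x_i^j$, $0\le j\le\beta_i-1$, the child along $x_i^j$ being $w$ with $i$ inserted at the $(j+1)$-th bullet from the right. Each Level $n$ word has one leaf child at Level $n+1$ (edge label $1$), labelled by the product of edge labels on its root path. *)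

theory Defs
  imports Main
begin

definition hessenberg :: "nat \<Rightarrow> (nat \<Rightarrow> nat) \<Rightarrow> bool" where
  "hessenberg n h \<longleftrightarrow>
     (\<forall>i\<in>{1..n}. i \<le> h i \<and> h i \<le> n) \<and>
     (\<forall>i. 1 \<le> i \<and> i < n \<longrightarrow> h i \<le> h (Suc i))"

definition h_permissible :: "(nat \<Rightarrow> nat) \<Rightarrow> nat list \<Rightarrow> bool" where
  "h_permissible h u \<longleftrightarrow> distinct u \<and>
     (\<forall>t. Suc t < length u \<longrightarrow> u ! t \<le> h (u ! Suc t))"

definition h_filling :: "(nat \<Rightarrow> nat) \<Rightarrow> nat \<Rightarrow> nat list \<Rightarrow> bool" where
  "h_filling h n u \<longleftrightarrow> distinct u \<and> set u = {1..n} \<and> h_permissible h u"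

definition insert_at :: "nat \<Rightarrow> nat \<Rightarrow> nat list \<Rightarrow> nat list" where
  "insert_at k x w = take k w @ [x] @ drop k w"

definition bullets :: "(nat \<Rightarrow> nat) \<Rightarrow> nat \<Rightarrow> nat list \<Rightarrow> nat list" where
  "bullets h i w = filter (\<lambda>k. h_permissible h (insert_at k i w)) [0..<Suc (length w)]"

(* children of w, ordered by edge x_i^j, j = 0,1,...: the child along x_i^j
   has i inserted at the (j+1)-th bullet from the right *)
definition tree_children :: "(nat \<Rightarrow> nat) \<Rightarrow> nat \<Rightarrow> nat list \<Rightarrow> nat list list" where
  "tree_children h i w = map (\<lambda>k. insert_at k i w) (rev (bullets h i w))"

(* list (with multiplicity) of the vertex words at Level i of the h-tableau-tree;
   Level 1 is the single word 1 (Level 0 is an auxiliary empty word) *)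
fun tree_level :: "(nat \<Rightarrow> nat) \<Rightarrow> nat \<Rightarrow> nat list list" where
  "tree_level h 0 = [[]]"
| "tree_level h (Suc 0) = [[1]]"
| "tree_level h (Suc (Suc i)) = concat (map (tree_children h (Suc (Suc i))) (tree_level h (Suc i)))"

end

theory Submission
  imports Defs
begin

lemma perm_iff: "h_permissible h u \<longleftrightarrow> distinct u \<and> successively (\<lambda>x y. x \<le> h y) u"
  unfolding h_permissible_def successively_conv_nth by simp

lemma distinct_concat_map_disj:
  assumes "distinct xs" "\<And>x. x \<in> set xs \<Longrightarrow> distinct (f x)"
    "\<And>x y. x \<in> set xs \<Longrightarrow> y \<in> set xs \<Longrightarrow> x \<noteq> y \<Longrightarrow> set (f x) \<inter> set (f y) = {}"
  shows "distinct (concat (map f xs))"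
  using assms by (induction xs) fastforce+

lemma remove_insert:
  assumes "m \<notin> set w" shows "remove1 m (insert_at k m w) = w"
proof -
  have "m \<notin> set (take k w)" using assms by (meson in_set_takeD)
  thus ?thesis unfolding insert_at_def by (simp add: remove1_append)
qed

lemma tw_insert:
  assumes "m \<notin> set w" "k \<le> length w"
  shows "length (takeWhile (\<lambda>x. x \<noteq> m) (insert_at k m w)) = k"
proof -
  have "\<forall>x\<in>set (take k w). x \<noteq> m" using assms(1) by (metis in_set_takeD)
  thus ?thesis unfolding insert_at_def using assms(2) by (simp add: takeWhile_append2)
qed

lemma set_bullets: "set (bullets h m w) = {k. k \<le> length w \<and> h_permissible h (insert_at k m w)}"
  unfolding bullets_def by (simp add: set_filter less_Suc_eq_le del: upt_Suc)

lemma set_insert_at: "k \<le> length w \<Longrightarrow> set (insert_at k m w) = insert m (set w)"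
  unfolding insert_at_def
  by (metis Un_insert_right append_Cons append_Nil append_take_drop_id insert_is_Un set_append set_simps(2) sup_commute)

definition S :: "(nat \<Rightarrow> nat) \<Rightarrow> nat \<Rightarrow> nat list set" where
  "S h i = {u. set u = {1..i} \<and> h_permissible h u}"

lemma step:
  assumes IH: "distinct L" "set L = S h (Suc i)"
  defines "m \<equiv> Suc (Suc i)"
  shows "distinct (concat (map (tree_children h m) L)) \<and>
         set (concat (map (tree_children h m) L)) = S h m"
proof
  have notin: "m \<notin> set w" if "w \<in> set L" for w
    using that IH(2) unfolding S_def m_def by auto
  show "distinct (concat (map (tree_children h m) L))"
  proof (rule distinct_concat_map_disj[OF IH(1)])
    fix w assume w: "w \<in> set L"
    have "inj_on (\<lambda>k. insert_at k m w) (set (rev (bullets h m w)))"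
    proof (rule inj_onI)
      fix k1 k2 assume "k1 \<in> set (rev (bullets h m w))" "k2 \<in> set (rev (bullets h m w))"
        and e: "insert_at k1 m w = insert_at k2 m w"
      hence "k1 \<le> length w" "k2 \<le> length w" by (auto simp: set_bullets)
      thus "k1 = k2" using tw_insert[OF notin[OF w]] e by metis
    qed
    moreover have "distinct (rev (bullets h m w))" unfolding bullets_def by simp
    ultimately show "distinct (tree_children h m w)"
      unfolding tree_children_def by (simp add: distinct_map)
  next
    fix x y assume xy: "x \<in> set L" "y \<in> set L" "x \<noteq> y"
    show "set (tree_children h m x) \<inter> set (tree_children h m y) = {}"
    proof (rule ccontr)
      assume "set (tree_children h m x) \<inter> set (tree_children h m y) \<noteq> {}"
      then obtain k1 k2 where "insert_at k1 m x = insert_at k2 m y"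
        unfolding tree_children_def by auto
      hence "remove1 m (insert_at k1 m x) = remove1 m (insert_at k2 m y)" by simp
      thus False using remove_insert notin xy by metis
    qed
  qed
  show "set (concat (map (tree_children h m) L)) = S h m"
  proof
    show "set (concat (map (tree_children h m) L)) \<subseteq> S h m"
    proof
      fix u assume "u \<in> set (concat (map (tree_children h m) L))"
      then obtain w k where w: "w \<in> set L" and k: "k \<in> set (bullets h m w)" and u: "u = insert_at k m w"
        unfolding tree_children_def by auto
      from k have "k \<le> length w" "h_permissible h u" using u by (auto simp: set_bullets)
      moreover have "set w = {1..Suc i}" using w IH(2) by (auto simp: S_def)
      ultimately show "u \<in> S h m" unfolding S_def using u set_insert_at m_def by auto
    qed
  next
    show "S h m \<subseteq> set (concat (map (tree_children h m) L))"
    proof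
      fix u assume u: "u \<in> S h m"
      hence su: "set u = {1..m}" and pu: "distinct u" "successively (\<lambda>x y. x \<le> h y) u"
        by (auto simp: S_def perm_iff)
      have "m \<in> set u" using su m_def by auto
      then obtain a b where ab: "u = a @ m # b" by (meson split_list)
      define w where "w = a @ b"
      have ins: "insert_at (length a) m w = u" unfolding w_def insert_at_def ab by simp
      have lt: "x < m" if "x \<in> set w" for x
      proof -
        have "x \<in> set u" "x \<noteq> m" using that pu(1) ab unfolding w_def by auto
        thus ?thesis using su by auto
      qed
      have dw: "distinct w" using pu(1) ab w_def by auto
      have sw: "set w = {1..Suc i}"
      proof -
        have "set u = insert m (set w)" "m \<notin> set w" using ab w_def pu(1) by auto
        hence "set w = {1..m} - {m}" using su by auto
        moreover have "{1..m} - {m} = {1..Suc i}" unfolding m_def by fastforce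
        ultimately show ?thesis by simp
      qed
      have succ: "successively (\<lambda>x y. x \<le> h y) w"
      proof -
        have A: "successively (\<lambda>x y. x \<le> h y) a" "successively (\<lambda>x y. x \<le> h y) (m # b)"
          and C: "a \<noteq> [] \<Longrightarrow> last a \<le> h m"
          using pu(2) ab by (auto simp: successively_append_iff)
        have B: "successively (\<lambda>x y. x \<le> h y) b" and D: "b \<noteq> [] \<Longrightarrow> m \<le> h (hd b)"
          using A(2) by (auto simp: successively_Cons)
        have "a \<noteq> [] \<Longrightarrow> last a < m" using lt unfolding w_def by auto
        hence "a \<noteq> [] \<Longrightarrow> b \<noteq> [] \<Longrightarrow> last a \<le> h (hd b)" using D by fastforce
        thus ?thesis unfolding w_def using A(1) B by (auto simp: successively_append_iff)
      qed
      have wL: "w \<in> set L" using IH(2) sw dw succ by (auto simp: S_def perm_iff)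
      have "length a \<in> set (bullets h m w)" using ins u unfolding set_bullets S_def w_def by auto
      thus "u \<in> set (concat (map (tree_children h m) L))"
        unfolding tree_children_def using wL ins by force
    qed
  qed
qed

lemma main: "distinct (tree_level h i) \<and> set (tree_level h i) = S h i"
proof (induction i rule: nat.induct)
  case zero
  show ?case by (auto simp: S_def h_permissible_def)
next
  case (Suc i)
  show ?case
  proof (cases i)
    case 0
    have "x = [Suc 0]" if "set x = {Suc 0}" "distinct x" for x :: "nat list"
    proof -
      have "length x = 1" using that distinct_card[OF that(2)] by simp
      then obtain a where "x = [a]" by (metis One_nat_def length_0_conv length_Suc_conv)
      thus ?thesis using that by simp
    qed
    then show ?thesis using 0 by (auto simp: S_def h_permissible_def)
  next
    case (Suc j)
    then show ?thesis using step[of "tree_level h (Suc j)" h j] Suc.IH by simp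
  qed
qed

theorem mainTheorem15:
  fixes h :: "nat \<Rightarrow> nat" and n :: nat
  assumes "1 \<le> n" and "hessenberg n h"
  shows "distinct (tree_level h n) \<and> set (tree_level h n) = {u. h_filling h n u}"
  using main[of h n] unfolding S_def h_filling_def h_permissible_def by auto

end
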